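(* Consider the knapsack auction game described in the context, with the Greedy allocation rule. In the uniform-price (UP) auction, bidding truthfully (submitting $B_i = v_i$, i.e. per-unit bid $b_i = v_i/k_i$) is a weakly dominant strategy for every bidder $i$, so the UP auction is dominant-strategy incentive compatible. Moreover, the UP payment rule is the unique payment rule which, combined with the Greedy allocation rule, yields a dominant-strategy incentive-compatible sealed-bid mechanism (under the normalization that a bidder who bids $0$ pays $0$). That is, the UP auction has the unique dominant-strategy incentive-compatible equilibrium of the knapsack auction game.
   Context: A seller owns a knapsack of capacity $K>0$ and sells its space to bidders $N=\{1,\dots,n\}$. Bidder $i$ owns an indivisible object of size $k_i<K$; sizes are public and $\sum_{i\in N}k_i>K$. Bidder $i$ obtains value $v_i$ if its object is packed and $0$ otherwise; $v_i$ is privately known to $i$, and values are drawn from a commonly known continuous, twice differentiable distribution $F$ with density $f<\infty$. Each bidder $i$ submits a bid $B_i$ for its object; its per-unit bid is $b_i=B_i/k_i$. Per-unit bids are assumed distinct and bidders are indexed so that $b_1>b_2>\dots>b_n$. Greedy allocation rule: objects are packed in decreasing order of per-unit bid, starting from the highest, and the auctioneer stops as soon as the next object in this order does not fit in the remaining capacity (no further, lower-ranked objects are considered). Thus the winning set is $W=\{1,\dots,m\}$ with $\sum_{j\in W}k_j\le K$ and $\sum_{j\in W}k_j+k_{m+1}>K$. UP payment rule: every packed bidder $i$ pays $k_i b_{m+1}$, where $b_{m+1}$ is the per-unit bid of the first bidder in the ranking whose object is not packed; unpacked bidders pay nothing. Bidder $i$'s payoff is $v_i$ minus its payment if packed, and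 $0$ otherwise. A mechanism (allocation rule, payment rule) is dominant-strategy incentive compatible (DSIC) if truthful bidding is a weakly dominant strategy for every bidder. *)

theory Defs
  imports Complex_Main
begin

definition per_unit :: "('a \<Rightarrow> real) \<Rightarrow> ('a \<Rightarrow> real) \<Rightarrow> 'a \<Rightarrow> real" where
  "per_unit k B j = B j / k j"

definition valid_profile :: "'a set \<Rightarrow> ('a \<Rightarrow> real) \<Rightarrow> ('a \<Rightarrow> real) \<Rightarrow> bool" where
  "valid_profile N k B \<longleftrightarrow> (\<forall>j\<in>N. 0 \<le> B j) \<and> inj_on (per_unit k B) N"

text \<open>Greedy allocation: objects are packed in decreasing order of per-unit bid and
the auctioneer stops at the first object that does not fit.\<close>
definition packed :: "'a set \<Rightarrow> ('a \<Rightarrow> real) \<Rightarrow> real \<Rightarrow> ('a \<Rightarrow> real) \<Rightarrow> 'a \<Rightarrow> bool" where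
  "packed N k K B i \<longleftrightarrow>
     (\<Sum>j\<in>{j\<in>N. per_unit k B i \<le> per_unit k B j}. k j) \<le> K"

definition clearing_price :: "'a set \<Rightarrow> ('a \<Rightarrow> real) \<Rightarrow> real \<Rightarrow> ('a \<Rightarrow> real) \<Rightarrow> real" where
  "clearing_price N k K B = Max (per_unit k B ` {j\<in>N. \<not> packed N k K B j})"

definition up_payment :: "'a set \<Rightarrow> ('a \<Rightarrow> real) \<Rightarrow> real \<Rightarrow> ('a \<Rightarrow> real) \<Rightarrow> 'a \<Rightarrow> real" where
  "up_payment N k K B i = (if packed N k K B i then k i * clearing_price N k K B else 0)"

definition payoff :: "'a set \<Rightarrow> ('a \<Rightarrow> real) \<Rightarrow> real \<Rightarrow> (('a \<Rightarrow> real) \<Rightarrow> 'a \<Rightarrow> real)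
                     \<Rightarrow> real \<Rightarrow> ('a \<Rightarrow> real) \<Rightarrow> 'a \<Rightarrow> real" where
  "payoff N k K P v B i = (if packed N k K B i then v else 0) - P B i"

definition dsic :: "'a set \<Rightarrow> ('a \<Rightarrow> real) \<Rightarrow> real \<Rightarrow> (('a \<Rightarrow> real) \<Rightarrow> 'a \<Rightarrow> real) \<Rightarrow> bool" where
  "dsic N k K P \<longleftrightarrow>
     (\<forall>B i v b. i \<in> N \<longrightarrow> valid_profile N k (B(i := v)) \<longrightarrow> valid_profile N k (B(i := b)) \<longrightarrow>
        payoff N k K P v (B(i := b)) i \<le> payoff N k K P v (B(i := v)) i)"

definition zero_bid_pays_zero :: "'a set \<Rightarrow> ('a \<Rightarrow> real) \<Rightarrow> (('a \<Rightarrow> real) \<Rightarrow> 'a \<Rightarrow> real) \<Rightarrow> bool" where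
  "zero_bid_pays_zero N k P \<longleftrightarrow>
     (\<forall>B i. i \<in> N \<longrightarrow> valid_profile N k B \<longrightarrow> B i = 0 \<longrightarrow> P B i = 0)"

end

theory Submission
  imports Defs
begin

lemma pu_upd: "per_unit k (B(i:=v)) l = (if l = i then v / k i else per_unit k B l)"
  by (simp add: per_unit_def)

lemma packed_mono:
  assumes "finite N" "\<forall>l\<in>N. 0 \<le> k l" "packed N k K B x" "per_unit k B x \<le> per_unit k B y"
  shows "packed N k K B y"
proof -
  have "{j\<in>N. per_unit k B y \<le> per_unit k B j} \<subseteq> {j\<in>N. per_unit k B x \<le> per_unit k B j}"
    using assms(4) by auto
  hence "(\<Sum>j\<in>{j\<in>N. per_unit k B y \<le> per_unit k B j}. k j) \<le> (\<Sum>j\<in>{j\<in>N. per_unit k B x \<le> per_unit k B j}. k j)"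
    using assms(1,2) by (intro sum_mono2) auto
  thus ?thesis using assms(3) unfolding packed_def by linarith
qed

lemma unpacked_exists:
  assumes "finite N" "0 < K" "(\<Sum>i\<in>N. k i) > K"
  shows "\<exists>j\<in>N. \<not> packed N k K B j"
proof -
  have ne: "N \<noteq> {}" using assms by auto
  obtain m where m: "m \<in> N" "per_unit k B m = Min (per_unit k B ` N)"
  proof -
    have "Min (per_unit k B ` N) \<in> per_unit k B ` N" using Min_in assms(1) ne by blast
    thus ?thesis using that by (metis imageE)
  qed
  have "{j\<in>N. per_unit k B m \<le> per_unit k B j} = N"
    using m assms(1) by auto
  hence "\<not> packed N k K B m" using assms(3) unfolding packed_def by simp
  thus ?thesis using m by blast
qed

lemma cp_props:
  assumes "finite N" "0 < K" "(\<Sum>i\<in>N. k i) > K"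
  shows "\<exists>j\<in>N. \<not> packed N k K B j \<and> clearing_price N k K B = per_unit k B j"
    and "\<And>j. j \<in> N \<Longrightarrow> \<not> packed N k K B j \<Longrightarrow> per_unit k B j \<le> clearing_price N k K B"
proof -
  let ?U = "{j\<in>N. \<not> packed N k K B j}"
  have fin: "finite (per_unit k B ` ?U)" using assms(1) by auto
  have ne: "per_unit k B ` ?U \<noteq> {}" using unpacked_exists[OF assms] by auto
  show "\<exists>j\<in>N. \<not> packed N k K B j \<and> clearing_price N k K B = per_unit k B j"
    using Max_in[OF fin ne] unfolding clearing_price_def by auto
  show "\<And>j. j \<in> N \<Longrightarrow> \<not> packed N k K B j \<Longrightarrow> per_unit k B j \<le> clearing_price N k K B"
    using Max_ge[OF fin] unfolding clearing_price_def by auto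
qed

lemma cp_less:
  assumes "finite N" "0 < K" "(\<Sum>i\<in>N. k i) > K" "\<forall>l\<in>N. 0 \<le> k l"
    and "packed N k K B i"
  shows "clearing_price N k K B < per_unit k B i"
proof -
  obtain j where j: "j \<in> N" "\<not> packed N k K B j" "clearing_price N k K B = per_unit k B j"
    using cp_props(1)[OF assms(1-3)] by blast
  show ?thesis
  proof (rule ccontr)
    assume "\<not> ?thesis"
    hence "per_unit k B i \<le> per_unit k B j" using j by simp
    hence "packed N k K B j" using packed_mono[OF assms(1,4,5)] by blast
    thus False using j by blast
  qed
qed

lemma W_sum:
  assumes "finite N" "\<forall>l\<in>N. 0 \<le> k l" "i \<in> N" "packed N k K B i"
  shows "(\<Sum>l\<in>{l\<in>N. packed N k K B l}. k l) \<le> K"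
proof -
  let ?W = "{l\<in>N. packed N k K B l}"
  have fin: "finite (per_unit k B ` ?W)" using assms(1) by auto
  have ne: "per_unit k B ` ?W \<noteq> {}" using assms by auto
  obtain m where m: "m \<in> ?W" "per_unit k B m = Min (per_unit k B ` ?W)"
    using Min_in[OF fin ne] by auto
  have sub: "?W \<subseteq> {j\<in>N. per_unit k B m \<le> per_unit k B j}"
    using m Min_le[OF fin] by auto
  have "(\<Sum>l\<in>?W. k l) \<le> (\<Sum>j\<in>{j\<in>N. per_unit k B m \<le> per_unit k B j}. k j)"
    using assms(1,2) sub by (intro sum_mono2) auto
  moreover have "packed N k K B m" using m by auto
  ultimately show ?thesis unfolding packed_def by linarith
qed

lemma above_packed:
  assumes "finite N" "0 < K" "(\<Sum>i\<in>N. k i) > K" "\<forall>l\<in>N. 0 \<le> k l"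
    and "i \<in> N" "packed N k K B i" "v / k i > clearing_price N k K B"
  shows "packed N k K (B(i:=v)) i"
proof -
  let ?S = "{j\<in>N. per_unit k (B(i:=v)) i \<le> per_unit k (B(i:=v)) j}"
  let ?W = "{l\<in>N. packed N k K B l}"
  have sub: "?S \<subseteq> ?W"
  proof
    fix l assume l: "l \<in> ?S"
    show "l \<in> ?W"
    proof (cases "l = i")
      case True thus ?thesis using assms l by auto
    next
      case False
      hence "v / k i \<le> per_unit k B l" using l by (simp add: pu_upd)
      hence "clearing_price N k K B < per_unit k B l" using assms(7) by linarith
      thus ?thesis using cp_props(2)[OF assms(1-3)] l by force
    qed
  qed
  have "(\<Sum>l\<in>?S. k l) \<le> (\<Sum>l\<in>?W. k l)"
    using assms(1,4) sub by (intro sum_mono2) auto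
  thus ?thesis using W_sum[OF assms(1,4,5,6)] unfolding packed_def by linarith
qed

lemma below_unpacked:
  assumes "finite N" "0 < K" "(\<Sum>i\<in>N. k i) > K" "\<forall>l\<in>N. 0 \<le> k l"
    and "i \<in> N" "v / k i < clearing_price N k K B"
  shows "\<not> packed N k K (B(i:=v)) i"
proof -
  obtain j where j: "j \<in> N" "\<not> packed N k K B j" "clearing_price N k K B = per_unit k B j"
    using cp_props(1)[OF assms(1-3)] by blast
  let ?S = "{l\<in>N. per_unit k (B(i:=v)) i \<le> per_unit k (B(i:=v)) l}"
  let ?T = "{l\<in>N. per_unit k B j \<le> per_unit k B l}"
  have sub: "?T \<subseteq> ?S"
  proof
    fix l assume l: "l \<in> ?T"
    show "l \<in> ?S"
    proof (cases "l = i")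
      case True thus ?thesis using l by auto
    next
      case False thus ?thesis using l assms(6) j(3) by (auto simp: pu_upd)
    qed
  qed
  have "(\<Sum>l\<in>?T. k l) \<le> (\<Sum>l\<in>?S. k l)"
    using assms(1,4) sub by (intro sum_mono2) auto
  moreover have "(\<Sum>l\<in>?T. k l) > K" using j(2) unfolding packed_def by simp
  ultimately show ?thesis unfolding packed_def by (simp add: pu_upd)
qed

lemma same_rank_packed:
  assumes "j \<noteq> i"
    and "per_unit k B j \<le> per_unit k B i \<longleftrightarrow> per_unit k (B(i:=x)) j \<le> per_unit k (B(i:=x)) i"
  shows "packed N k K B j \<longleftrightarrow> packed N k K (B(i:=x)) j"
proof -
  have "{l\<in>N. per_unit k B j \<le> per_unit k B l} = {l\<in>N. per_unit k (B(i:=x)) j \<le> per_unit k (B(i:=x)) l}"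
    using assms by (auto simp: pu_upd)
  thus ?thesis unfolding packed_def by simp
qed


lemma cp_le:
  assumes "finite N" "0 < K" "(\<Sum>i\<in>N. k i) > K" "\<forall>l\<in>N. 0 \<le> k l"
    and "i \<in> N" "packed N k K B i" "packed N k K (B(i:=v)) i"
    and "inj_on (per_unit k (B(i:=v))) N"
  shows "clearing_price N k K B \<le> clearing_price N k K (B(i:=v))"
proof -
  obtain j where j: "j \<in> N" "\<not> packed N k K B j" "clearing_price N k K B = per_unit k B j"
    using cp_props(1)[OF assms(1-3)] by blast
  have ji: "j \<noteq> i" using j assms(6) by auto
  have "per_unit k B j < per_unit k B i" using cp_less[OF assms(1-4,6)] j by simp
  have "\<not> (v / k i < clearing_price N k K B)"
    using below_unpacked[OF assms(1-5)] assms(7) by blast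
  moreover have "per_unit k (B(i:=v)) j \<noteq> per_unit k (B(i:=v)) i"
    using assms(8) ji j(1) assms(5) unfolding inj_on_def by blast
  ultimately have lt: "per_unit k (B(i:=v)) j < per_unit k (B(i:=v)) i"
    using j(3) ji by (auto simp: pu_upd)
  have "\<not> packed N k K (B(i:=v)) j"
    using same_rank_packed[of j i k B v N K] ji lt \<open>per_unit k B j < per_unit k B i\<close> j(2)
    by (auto simp: pu_upd)
  hence "per_unit k (B(i:=v)) j \<le> clearing_price N k K (B(i:=v))"
    using cp_props(2)[OF assms(1-3)] j(1) by blast
  thus ?thesis using j(3) ji by (simp add: pu_upd)
qed

lemma adm_valid:
  assumes "valid_profile N k B" "0 \<le> x" "\<forall>j\<in>N-{i}. per_unit k B j \<noteq> x / k i"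
  shows "valid_profile N k (B(i:=x))"
  using assms unfolding valid_profile_def inj_on_def
  by (auto simp: pu_upd split: if_splits)

lemma avoid:
  fixes a b :: real
  assumes "a < b" "finite F"
  shows "\<exists>x. a < x \<and> x < b \<and> x \<notin> F"
proof -
  have "infinite ({a<..<b} - F)" using assms by simp
  hence "{a<..<b} - F \<noteq> {}" by (metis finite.emptyI)
  thus ?thesis by auto
qed

theorem proposition1:
  fixes N :: "'a set" and k :: "'a \<Rightarrow> real" and K :: real
  assumes "finite N"
    and "0 < K"
    and "\<forall>i\<in>N. 0 < k i \<and> k i < K"
    and "(\<Sum>i\<in>N. k i) > K"
  shows "dsic N k K (up_payment N k K) \<and>
         (\<forall>P. dsic N k K P \<and> zero_bid_pays_zero N k P \<longrightarrow>
            (\<forall>B i. valid_profile N k B \<and> i \<in> N \<and> (\<forall>j\<in>N - {i}. 0 < B j)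
                   \<longrightarrow> P B i = up_payment N k K B i))"
proof
  have k0: "\<forall>l\<in>N. 0 \<le> k l" using assms(3) by auto
  note A = assms(1,2,4) k0
  show "dsic N k K (up_payment N k K)"
    unfolding dsic_def
  proof (intro allI impI)
    fix B i v b
    assume i: "i \<in> N" and vv: "valid_profile N k (B(i := v))" and vb: "valid_profile N k (B(i := b))"
    have ki: "0 < k i" using assms(3) i by auto
    let ?Bb = "B(i:=b)" and ?Bv = "B(i:=v)"
    have e1: "?Bb(i:=v) = ?Bv" and e2: "?Bv(i:=b) = ?Bb" by simp_all
    show "payoff N k K (up_payment N k K) v ?Bb i \<le> payoff N k K (up_payment N k K) v ?Bv i"
    proof (cases "packed N k K ?Bb i"; cases "packed N k K ?Bv i")
      assume pb: "packed N k K ?Bb i" and pv: "packed N k K ?Bv i"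
      have "clearing_price N k K ?Bb \<le> clearing_price N k K ?Bv"
        using cp_le[OF A i pb, of v] pv vv unfolding valid_profile_def by (simp add: e1)
      moreover have "clearing_price N k K ?Bv \<le> clearing_price N k K ?Bb"
        using cp_le[OF A i pv, of b] pb vb unfolding valid_profile_def by (simp add: e2)
      ultimately show ?thesis using pb pv by (simp add: payoff_def up_payment_def)
    next
      assume pb: "packed N k K ?Bb i" and pv: "\<not> packed N k K ?Bv i"
      have "\<not> (v / k i > clearing_price N k K ?Bb)"
        using above_packed[OF A i pb, of v] pv unfolding e1 by blast
      hence "v / k i \<le> clearing_price N k K ?Bb" by linarith
      hence "v \<le> k i * clearing_price N k K ?Bb" using ki by (simp add: pos_divide_le_eq mult.commute)
      thus ?thesis using pb pv by (simp add: payoff_def up_payment_def)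
    next
      assume pb: "\<not> packed N k K ?Bb i" and pv: "packed N k K ?Bv i"
      have "clearing_price N k K ?Bv < v / k i"
        using cp_less[OF A pv] by (simp add: pu_upd)
      hence "k i * clearing_price N k K ?Bv < v" using ki by (simp add: less_divide_eq mult.commute)
      thus ?thesis using pb pv by (simp add: payoff_def up_payment_def)
    next
      assume pb: "\<not> packed N k K ?Bb i" and pv: "\<not> packed N k K ?Bv i"
      thus ?thesis by (simp add: payoff_def up_payment_def)
    qed
  qed
  show "\<forall>P. dsic N k K P \<and> zero_bid_pays_zero N k P \<longrightarrow>
            (\<forall>B i. valid_profile N k B \<and> i \<in> N \<and> (\<forall>j\<in>N - {i}. 0 < B j)
                   \<longrightarrow> P B i = up_payment N k K B i)"
  proof (intro allI impI)
    fix P B i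
    assume PP: "dsic N k K P \<and> zero_bid_pays_zero N k P"
      and H: "valid_profile N k B \<and> i \<in> N \<and> (\<forall>j\<in>N - {i}. 0 < B j)"
    have val: "valid_profile N k B" and i: "i \<in> N" and pos: "\<forall>j\<in>N - {i}. 0 < B j"
      using H by auto
    have ki: "0 < k i" using assms(3) i by auto
    have D: "\<And>v b. valid_profile N k (B(i:=v)) \<Longrightarrow> valid_profile N k (B(i:=b)) \<Longrightarrow>
        payoff N k K P v (B(i:=b)) i \<le> payoff N k K P v (B(i:=v)) i"
    proof -
      fix v b
      assume a1: "valid_profile N k (B(i:=v))" and a2: "valid_profile N k (B(i:=b))"
      have d: "dsic N k K P" using PP by simp
      show "payoff N k K P v (B(i:=b)) i \<le> payoff N k K P v (B(i:=v)) i"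
        using d[unfolded dsic_def, rule_format, OF i a1 a2] .
    qed
    define adm where "adm x \<longleftrightarrow> 0 \<le> x \<and> (\<forall>j\<in>N-{i}. per_unit k B j \<noteq> x / k i)" for x
    have admv: "valid_profile N k (B(i:=x))" if "adm x" for x
      using adm_valid[OF val] that unfolding adm_def by blast
    have pupos: "\<forall>j\<in>N-{i}. 0 < per_unit k B j"
      using pos assms(3) by (auto simp: per_unit_def)
    have adm0: "adm 0" using pupos unfolding adm_def by force
    have vB: "valid_profile N k (B(i:=B i))" using val by simp
    have p0: "P (B(i:=0)) i = 0"
      using PP admv[OF adm0] i unfolding zero_bid_pays_zero_def by auto
    have unp: "P (B(i:=x)) i = 0" if ax: "adm x" and np: "\<not> packed N k K (B(i:=x)) i" for x
    proof -
      have x0: "0 \<le> x" using ax unfolding adm_def by auto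
      have "payoff N k K P x (B(i:=0)) i \<le> payoff N k K P x (B(i:=x)) i"
        using D[OF admv[OF ax] admv[OF adm0]] .
      moreover have "payoff N k K P 0 (B(i:=x)) i \<le> payoff N k K P 0 (B(i:=0)) i"
        using D[OF admv[OF adm0] admv[OF ax]] .
      ultimately have "(if packed N k K (B(i:=0)) i then x else 0) \<le> - P (B(i:=x)) i"
        and "- P (B(i:=x)) i \<le> 0"
        using np p0 unfolding payoff_def by simp_all
      moreover have "0 \<le> (if packed N k K (B(i:=0)) i then x else 0)" using x0 by simp
      ultimately show ?thesis by linarith
    qed
    show "P B i = up_payment N k K B i"
    proof (cases "packed N k K B i")
      case False
      have "P (B(i:=B i)) i = 0"
      proof (rule unp)
        have inj: "inj_on (per_unit k B) N" and nn: "0 \<le> B i" using val i unfolding valid_profile_def by auto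
        have "\<forall>j\<in>N-{i}. per_unit k B j \<noteq> per_unit k B i"
          using inj i unfolding inj_on_def by blast
        thus "adm (B i)" using nn unfolding adm_def per_unit_def by simp
        show "\<not> packed N k K (B(i:=B i)) i" using False by simp
      qed
      thus ?thesis using False by (simp add: up_payment_def)
    next
      case True
      define c where "c = clearing_price N k K B"
      have pk: "P (B(i:=x)) i = P B i" if ax: "adm x" and pp: "packed N k K (B(i:=x)) i" for x
      proof -
        have "payoff N k K P x (B(i:=B i)) i \<le> payoff N k K P x (B(i:=x)) i"
          using D[OF admv[OF ax] vB] .
        moreover have "payoff N k K P (B i) (B(i:=x)) i \<le> payoff N k K P (B i) (B(i:=B i)) i"
          using D[OF vB admv[OF ax]] .
        ultimately show ?thesis using pp True by (simp add: payoff_def)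
      qed
      have up: "P B i \<le> x" if ax: "adm x" and gt: "x / k i > c" for x
      proof -
        have pp: "packed N k K (B(i:=x)) i" using above_packed[OF A i True] gt c_def by blast
        have x0: "0 \<le> x" using ax unfolding adm_def by auto
        have "payoff N k K P x (B(i:=0)) i \<le> payoff N k K P x (B(i:=x)) i"
          using D[OF admv[OF ax] admv[OF adm0]] .
        hence "(if packed N k K (B(i:=0)) i then x else 0) \<le> x - P B i"
          using pk[OF ax pp] pp p0 unfolding payoff_def by simp
        moreover have "0 \<le> (if packed N k K (B(i:=0)) i then x else 0)" using x0 by simp
        ultimately show ?thesis by linarith
      qed
      have lo: "x \<le> P B i" if ax: "adm x" and lt: "x / k i < c" for x
      proof -
        have np: "\<not> packed N k K (B(i:=x)) i" using below_unpacked[OF A i] lt c_def by blast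
        have "payoff N k K P x (B(i:=B i)) i \<le> payoff N k K P x (B(i:=x)) i"
          using D[OF admv[OF ax] vB] .
        thus ?thesis using unp[OF ax np] np True by (simp add: payoff_def)
      qed
      obtain j where j: "j \<in> N" "\<not> packed N k K B j" "c = per_unit k B j"
        using cp_props(1)[OF assms(1,2,4)] c_def by blast
      have "j \<noteq> i" using j True by auto
      hence cpos: "0 < c" using j pupos by auto
      let ?F = "(\<lambda>j. per_unit k B j * k i) ` (N - {i})"
      have finF: "finite ?F" using assms(1) by simp
      have admI: "adm x" if "0 \<le> x" "x \<notin> ?F" for x
        unfolding adm_def
      proof (intro conjI ballI)
        show "0 \<le> x" by fact
        fix l assume l: "l \<in> N - {i}"
        show "per_unit k B l \<noteq> x / k i"
        proof
          assume "per_unit k B l = x / k i"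
          hence "x = per_unit k B l * k i" using ki by simp
          thus False using that(2) l by blast
        qed
      qed
      have "P B i = k i * c"
      proof (rule ccontr)
        assume ne: "P B i \<noteq> k i * c"
        show False
        proof (cases "P B i > k i * c")
          case True
          then obtain x where x: "k i * c < x" "x < P B i" "x \<notin> ?F"
            using avoid[OF True finF] by blast
          have "0 < k i * c" using cpos ki by simp
          hence "0 \<le> x" using x(1) by linarith
          hence "adm x" using admI x by blast
          moreover have "x / k i > c" using pos_less_divide_eq[OF ki] x(1) by (metis mult.commute)
          ultimately have "P B i \<le> x" using up by blast
          thus False using x(2) by linarith
        next
          case False
          hence lt: "max 0 (P B i) < k i * c" using ne cpos ki by auto
          then obtain x where x: "max 0 (P B i) < x" "x < k i * c" "x \<notin> ?F"
            using avoid[OF lt finF] by blast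
          have "0 \<le> x" using x(1) by simp
          hence "adm x" using admI x by blast
          moreover have "x / k i < c" using pos_divide_less_eq[OF ki] x(2) by (metis mult.commute)
          ultimately have "x \<le> P B i" using lo by blast
          thus False using x(1) by linarith
        qed
      qed
      thus ?thesis using True c_def by (simp add: up_payment_def)
    qed
  qed
qed

end
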